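(* 1. Let $\alpha\ge1$ and $M_{0,\alpha}=\sum_{x\in\mathcal{X}}p_x^{\alpha}\,I(F_x(X^n)=0)$. For $n\ge (2\alpha-1)\ln 2/(2\alpha-1-\ln 2)$ and all $\epsilon\ge0$, $$\Pr\big(M_{0,\alpha}-E[M_{0,\alpha}]\le-\epsilon\big)\le \exp\Big\{-\frac{n^{2\alpha-1}\epsilon^2}{2\gamma_\alpha}\Big\},$$ where $\gamma_\alpha=\max_{t>0}t^{2\alpha-1}e^{-t}(1-e^{-t})$. 2. Let $P$ satisfy $p_x\ge 1/k$ for all $x\in\mathcal{X}$, and let $H_0(X^n,P)=\sum_{x\in\mathcal{X}}p_x\log_2(1/p_x)\,I(F_x(X^n)=0)$. For $n\ge3$ and all $\epsilon\ge0$, $$\Pr\big(H_0-E[H_0]\le-\epsilon\big)\le \exp\Big\{-\frac{n\epsilon^2}{2\gamma(\log_2 k)^2}\Big\},$$ where $\gamma=\max_{t>0}te^{-t}(1-e^{-t})=0.2603\ldots$.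
   Context: $P$ is a discrete probability distribution on a countable alphabet $\mathcal{X}$, $p_x=P(x)$, and $X^n=(X_1,\ldots,X_n)$ are i.i.d. samples from $P$. $F_x(X^n)=\sum_{i=1}^n I(X_i=x)$ is the number of occurrences of $x$ in $X^n$, and $I(\cdot)$ is the indicator. *)

theory Defs
  imports "HOL-Probability.Probability"
begin

definition sample_pmf :: "'a pmf \<Rightarrow> nat \<Rightarrow> (nat \<Rightarrow> 'a) pmf" where
  "sample_pmf P n = Pi_pmf {..<n} undefined (\<lambda>_. P)"

definition occ :: "nat \<Rightarrow> (nat \<Rightarrow> 'a) \<Rightarrow> 'a \<Rightarrow> nat" where
  "occ n xs x = card {i. i < n \<and> xs i = x}"

definition indic_bool :: "bool \<Rightarrow> real" where
  "indic_bool b = (if b then 1 else 0)"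

definition M0 :: "'a pmf \<Rightarrow> real \<Rightarrow> nat \<Rightarrow> (nat \<Rightarrow> 'a) \<Rightarrow> real" where
  "M0 P \<alpha> n xs = (\<Sum>\<^sub>\<infinity>x. pmf P x powr \<alpha> * indic_bool (occ n xs x = 0))"

definition H0 :: "'a pmf \<Rightarrow> nat \<Rightarrow> (nat \<Rightarrow> 'a) \<Rightarrow> real" where
  "H0 P n xs = (\<Sum>\<^sub>\<infinity>x. pmf P x * log 2 (1 / pmf P x) * indic_bool (occ n xs x = 0))"

text \<open>gamma_alpha = max_{t>0} t^(2 alpha - 1) e^(-t) (1 - e^(-t)) (the maximum is attained).\<close>
definition gamma_alpha :: "real \<Rightarrow> real" where
  "gamma_alpha \<alpha> = (SUP t\<in>{0<..}. t powr (2*\<alpha> - 1) * exp (-t) * (1 - exp (-t)))"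

end

theory Submission
  imports Defs "HOL-Probability.Hoeffding"
begin

lemma intb:
  fixes f :: "'b \<Rightarrow> real"
  assumes "\<And>x. \<bar>f x\<bar> \<le> B"
  shows "integrable (measure_pmf M) f"
  by (rule measure_pmf.integrable_const_bound[where B=B]) (use assms in auto)

lemma exp_bind:
  fixes f :: "'b \<Rightarrow> real"
  assumes "\<And>x. \<bar>f x\<bar> \<le> B"
  shows "measure_pmf.expectation (bind_pmf M N) f = measure_pmf.expectation M (\<lambda>x. measure_pmf.expectation (N x) f)"
  unfolding measure_pmf_bind
  apply (rule integral_bind[where K="count_space UNIV" and B=B and B'=1])
  using assms measurable_measure_pmf[of N]
  by (auto simp: measure_pmf.emeasure_space_1 prob_space_imp_subprob_space measure_pmf.finite_measure_axioms)

definition obs :: "'a pmf \<Rightarrow> nat \<Rightarrow> 'a set pmf" where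
  "obs P n = map_pmf (\<lambda>xs. xs ` {..<n}) (sample_pmf P n)"

lemma obs_0: "obs P 0 = return_pmf {}"
  by (simp add: obs_def sample_pmf_def map_pmf_def map_return_pmf)

lemma obs_Suc: "obs P (Suc n) = bind_pmf P (\<lambda>y. map_pmf (insert y) (obs P n))"
proof -
  have "sample_pmf P (Suc n) = do {y \<leftarrow> P; f \<leftarrow> sample_pmf P n; return_pmf (f(n := y))}"
    unfolding sample_pmf_def lessThan_Suc by (rule Pi_pmf_insert') auto
  moreover have "(f(n := y)) ` {..<Suc n} = insert y (f ` {..<n})" for f :: "nat \<Rightarrow> 'a" and y
    by (auto simp: lessThan_Suc)
  ultimately show ?thesis
    unfolding obs_def by (simp add: map_pmf_def bind_assoc_pmf bind_return_pmf)
qed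

lemma key:
  fixes g :: "'a set \<Rightarrow> real"
  assumes "\<And>A. 0 \<le> g A" "\<And>A. g A \<le> 1" "\<And>A B. A \<subseteq> B \<Longrightarrow> g A \<le> g B"
    "\<And>A. g (insert y A) = g A"
  shows "(1 - pmf P y)^n * measure_pmf.expectation (obs P n) g
         \<le> measure_pmf.expectation (obs P n) (\<lambda>B. if y \<in> B then 0 else g B)"
  using assms
proof (induction n arbitrary: g)
  case 0 then show ?case by (simp add: obs_0)
next
  case (Suc n)
  let ?E = "\<lambda>h. measure_pmf.expectation (obs P n) h"
  define G where "G z = ?E (\<lambda>B. g (insert z B))" for z
  define R where "R z = ?E (\<lambda>B. if y \<in> insert z B then 0 else g (insert z B))" for z
  define q where "q = (1 - pmf P y)^n"
  define p where "p = pmf P y"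
  define G0 where "G0 = ?E g"
  have lhs: "measure_pmf.expectation (obs P (Suc n)) g = measure_pmf.expectation P G"
    unfolding obs_Suc G_def by (subst exp_bind[where B=1]) (use Suc.prems in auto)
  have rhs: "measure_pmf.expectation (obs P (Suc n)) (\<lambda>B. if y \<in> B then 0 else g B) = measure_pmf.expectation P R"
    unfolding obs_Suc R_def by (subst exp_bind[where B=1]) (use Suc.prems in auto)
  have G01: "0 \<le> G0" "G0 \<le> 1" unfolding G0_def using Suc.prems
    by (auto intro!: integral_nonneg_AE measure_pmf.prob_space_axioms prob_space.integral_le_const intb[where B=1])
  have Gb: "\<bar>G z\<bar> \<le> 1" for z unfolding G_def using Suc.prems
    by (auto intro!: integral_nonneg_AE measure_pmf.prob_space_axioms prob_space.integral_le_const intb[where B=1])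
  have Rb: "\<bar>R z\<bar> \<le> 1" for z unfolding R_def using Suc.prems
    by (auto intro!: integral_nonneg_AE measure_pmf.prob_space_axioms prob_space.integral_le_const intb[where B=1])
  have Gy: "G y = G0" unfolding G_def G0_def using Suc.prems by simp
  have Gge: "G0 \<le> G z" for z unfolding G_def G0_def
    by (rule integral_mono) (use Suc.prems in \<open>auto intro!: intb[where B=1] simp: subset_insertI\<close>)
  have IH: "q * G z \<le> ?E (\<lambda>B. if y \<in> B then 0 else g (insert z B))" for z
    unfolding q_def G_def
    by (rule Suc.IH) (use Suc.prems(1,2,4) in \<open>auto simp: insert_commute intro!: Suc.prems(3) insert_mono\<close>)
  have RIH: "q * (indicator (-{y}) z * G z) \<le> R z" for z
  proof (cases "z = y")
    case True then show ?thesis by (simp add: R_def)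
  next
    case False
    then have "R z = ?E (\<lambda>B. if y \<in> B then 0 else g (insert z B))"
      unfolding R_def by (intro Bochner_Integration.integral_cong) auto
    then show ?thesis using IH[of z] False by simp
  qed
  define I where "I = measure_pmf.expectation P (\<lambda>z. indicator (-{y}) z * G z)"
  have p01: "0 \<le> p" "p \<le> 1" by (auto simp: p_def pmf_le_1)
  have q01: "0 \<le> q" "q \<le> 1" unfolding q_def using p01 p_def by (auto intro: power_le_one)
  have qb: "\<bar>q * (indicator (-{y}) z * G z)\<bar> \<le> 1" for z
  proof -
    have "\<bar>q * (indicator (-{y}) z * G z)\<bar> = q * (indicator (-{y}) z * \<bar>G z\<bar>)"
      using q01 by (simp add: abs_mult indicator_def)
    also have "\<dots> \<le> 1 * 1" using q01 Gb[of z] by (intro mult_mono) (auto simp: indicator_def)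
    finally show ?thesis by simp
  qed
  have "measure_pmf.expectation P R \<ge> measure_pmf.expectation P (\<lambda>z. q * (indicator (-{y}) z * G z))"
    by (rule integral_mono[OF intb[OF qb] intb[OF Rb] RIH])
  then have r1: "measure_pmf.expectation P R \<ge> q * I" unfolding I_def by simp
  have split: "G z = indicator (-{y}) z * G z + indicator {y} z * G0" for z
    using Gy by (auto simp: indicator_def)
  have l1: "measure_pmf.expectation P G = I + p * G0"
  proof -
    have "measure_pmf.expectation P G = measure_pmf.expectation P (\<lambda>z. indicator (-{y}) z * G z + indicator {y} z * G0)"
      by (rule Bochner_Integration.integral_cong[OF refl split])
    also have "\<dots> = I + measure_pmf.expectation P (\<lambda>z. indicator {y} z * G0)"
      unfolding I_def
      by (rule Bochner_Integration.integral_add) (use Gb G01 in \<open>auto intro!: intb[where B=1] simp: indicator_def\<close>)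
    also have "measure_pmf.expectation P (\<lambda>z. indicator {y} z * G0) = p * G0"
      by (simp add: p_def measure_pmf_single)
    finally show ?thesis .
  qed
  have I1: "I \<ge> (1 - p) * G0"
  proof -
    have a: "measure_pmf.expectation P (\<lambda>z. indicator (-{y}) z * G0) \<le> I"
      unfolding I_def
      by (rule integral_mono) (use Gb G01 Gge in \<open>auto intro!: intb[where B=1] simp: indicator_def\<close>)
    have b: "measure_pmf.expectation P (\<lambda>z. indicator (-{y}) z * G0) = (1 - p) * G0"
    proof -
      have "measure_pmf.prob P (- {y}) = 1 - pmf P y"
        using measure_pmf.prob_compl[of "{y}" P] by (simp add: measure_pmf_single Compl_eq_Diff_UNIV)
      then show ?thesis by (simp add: p_def)
    qed
    show ?thesis using a unfolding b .
  qed
  have q0: "0 \<le> q" using q01 by simp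
  have "(1 - p) * (I + p * G0) \<le> I"
  proof -
    have "p * ((1 - p) * G0) \<le> p * I" using I1 p01 by (intro mult_left_mono) auto
    then show ?thesis by (simp add: algebra_simps)
  qed
  then have "q * ((1 - p) * (I + p * G0)) \<le> q * I" using q0 by (rule mult_left_mono)
  then show ?case using r1 l1 by (simp add: q_def p_def lhs rhs mult_ac)
qed


lemma miss_prob: "measure_pmf.expectation (obs P n) (\<lambda>B. if y \<in> B then 0 else 1) = (1 - pmf P y)^n"
proof (induction n)
  case 0 then show ?case by (simp add: obs_0)
next
  case (Suc n)
  have "measure_pmf.expectation (obs P (Suc n)) (\<lambda>B. if y \<in> B then 0 else 1::real)
      = measure_pmf.expectation P (\<lambda>z. measure_pmf.expectation (obs P n) (\<lambda>B. if y \<in> insert z B then 0 else 1::real))"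
    unfolding obs_Suc by (subst exp_bind[where B=1]) auto
  also have "\<dots> = measure_pmf.expectation P (\<lambda>z. indicator (-{y}) z * (1 - pmf P y)^n)"
  proof (rule Bochner_Integration.integral_cong[OF refl])
    fix z show "measure_pmf.expectation (obs P n) (\<lambda>B. if y \<in> insert z B then 0 else 1::real) = indicator (-{y}) z * (1 - pmf P y)^n"
      using Suc by (cases "z = y") auto
  qed
  also have "\<dots> = (1 - pmf P y) ^ Suc n"
  proof -
    have "measure_pmf.prob P (- {y}) = 1 - pmf P y"
      using measure_pmf.prob_compl[of "{y}" P] by (simp add: measure_pmf_single Compl_eq_Diff_UNIV)
    then show ?thesis by simp
  qed
  finally show ?case .
qed

lemma prod_bound:
  assumes "finite S" "\<And>x. 0 \<le> w x" "0 \<le> l"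
  shows "measure_pmf.expectation (obs P n) (\<lambda>B. exp (- l * (\<Sum>x\<in>S. if x \<in> B then 0 else w x)))
     \<le> (\<Prod>x\<in>S. 1 - (1 - pmf P x)^n + (1 - pmf P x)^n * exp (- l * w x))"
  using assms(1)
proof (induction S rule: finite_induct)
  case empty then show ?case by simp
next
  case (insert y T)
  define f where "f B = exp (- l * (\<Sum>x\<in>T. if x \<in> B then 0 else w x))" for B
  define c where "c = 1 - exp (- l * w y)"
  define q where "q = (1 - pmf P y)^n"
  let ?E = "measure_pmf.expectation (obs P n)"
  have sn: "0 \<le> (\<Sum>x\<in>T. if x \<in> B then 0 else w x)" for B by (auto intro!: sum_nonneg assms(2))
  have f01: "0 \<le> f B" "f B \<le> 1" for B unfolding f_def using sn[of B] assms(3) by (auto simp: mult_nonneg_nonneg)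
  have fmono: "f A \<le> f B" if "A \<subseteq> B" for A B
  proof -
    have "(\<Sum>x\<in>T. if x \<in> B then 0 else w x) \<le> (\<Sum>x\<in>T. if x \<in> A then 0 else w x)"
      using that assms(2) by (intro sum_mono) auto
    then show ?thesis unfolding f_def using assms(3) by (auto intro: mult_left_mono)
  qed
  have finv: "f (insert y A) = f A" for A
    unfolding f_def using insert.hyps by (intro arg_cong[where f=exp] arg_cong[where f="\<lambda>t. - l * t"] sum.cong) auto
  have K: "q * ?E f \<le> ?E (\<lambda>B. if y \<in> B then 0 else f B)"
    unfolding q_def by (rule key) (use f01 fmono finv in auto)
  have c01: "0 \<le> c" "c \<le> 1" unfolding c_def using assms(2,3) by (auto simp: mult_nonneg_nonneg)
  have q01: "0 \<le> q" "q \<le> 1" unfolding q_def by (auto intro: power_le_one simp: pmf_le_1)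
  have eq: "exp (- l * (\<Sum>x\<in>insert y T. if x \<in> B then 0 else w x)) = f B - c * (if y \<in> B then 0 else f B)" for B
    using insert.hyps by (simp add: f_def c_def algebra_simps exp_add[symmetric])
  have "?E (\<lambda>B. exp (- l * (\<Sum>x\<in>insert y T. if x \<in> B then 0 else w x))) = ?E f - c * ?E (\<lambda>B. if y \<in> B then 0 else f B)"
    unfolding eq
    by (subst Bochner_Integration.integral_diff) (use f01 in \<open>auto intro!: intb[where B=1]\<close>)
  also have "\<dots> \<le> ?E f - c * (q * ?E f)" using K c01 by (intro diff_left_mono mult_left_mono) auto
  also have "\<dots> = (1 - c * q) * ?E f" by (simp add: algebra_simps)
  also have "\<dots> \<le> (1 - c * q) * (\<Prod>x\<in>T. 1 - (1 - pmf P x)^n + (1 - pmf P x)^n * exp (- l * w x))"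
  proof -
    have "f = (\<lambda>B. exp (- l * (\<Sum>x\<in>T. if x \<in> B then 0 else w x)))" by (rule ext) (simp add: f_def)
    then have "?E f \<le> (\<Prod>x\<in>T. 1 - (1 - pmf P x)^n + (1 - pmf P x)^n * exp (- l * w x))"
      using insert.IH by simp
    then show ?thesis using c01 q01 by (intro mult_left_mono) (auto simp: mult_le_one)
  qed
  also have "\<dots> = (\<Prod>x\<in>insert y T. 1 - (1 - pmf P x)^n + (1 - pmf P x)^n * exp (- l * w x))"
    using insert.hyps by (simp add: c_def q_def algebra_simps)
  finally show ?case .
qed


lemma refined_aux:
  fixes h p :: real
  assumes "h \<ge> 0" and "p \<ge> 1/2" and "p \<le> 1"
  defines "L \<equiv> (\<lambda>h. -h * p + ln (1 + p * (exp h - 1)))"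
  shows   "L h \<le> h\<^sup>2 * (p * (1 - p)) / 2"
proof (cases "h = 0")
  case False
  hence h: "h > 0"
    using \<open>h \<ge> 0\<close> by simp
  define L' where "L' = (\<lambda>h. -p + p * exp h / (1 + p * (exp h - 1)))"
  define L'' where "L'' = (\<lambda>h. -(p\<^sup>2) * exp h * exp h / (1 + p * (exp h - 1))\<^sup>2 +
                              p * exp h / (1 + p * (exp h - 1)))"
  define Ls where "Ls = (\<lambda>n. [L, L', L''] ! n)"
  have p0: "p \<ge> 0" using assms by simp
  have [simp]: "L 0 = 0" "L' 0 = 0"
    by (auto simp: L_def L'_def)

  have L': "(L has_real_derivative L' x) (at x)" if "x \<in> {0..h}" for x
  proof -
    have "1 + p * (exp x - 1) > 0"
      using p0 that by (intro add_pos_nonneg mult_nonneg_nonneg) auto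
    thus ?thesis
      unfolding L_def L'_def by (auto intro!: derivative_eq_intros)
  qed

  have L'': "(L' has_real_derivative L'' x) (at x)" if "x \<in> {0..h}" for x
  proof -
    have *: "1 + p * (exp x - 1) > 0"
      using p0 that by (intro add_pos_nonneg mult_nonneg_nonneg) auto
    show ?thesis
      unfolding L'_def L''_def
      by (insert *, (rule derivative_eq_intros refl | simp)+) (auto simp: divide_simps; algebra)
  qed

  have diff: "\<forall>m t. m < 2 \<and> 0 \<le> t \<and> t \<le> h \<longrightarrow> (Ls m has_real_derivative Ls (Suc m) t) (at t)"
    using L' L'' by (auto simp: Ls_def nth_Cons split: nat.splits)
  from Taylor[of 2 Ls L 0 h 0 h, OF _ _ diff]
    obtain t where t: "t \<in> {0<..<h}" "L h = L'' t * h\<^sup>2 / 2"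
      using \<open>h > 0\<close> by (auto simp: Ls_def lessThan_nat_numeral)
  define D where "D = 1 + p * (exp t - 1)"
  define u where "u = p * exp t / D"
  have et: "exp t \<ge> 1" using t by simp
  have D0: "D > 0" unfolding D_def using p0 et by (intro add_pos_nonneg mult_nonneg_nonneg) auto
  have "L'' t = u * (1 - u)"
    by (simp add: L''_def u_def D_def divide_simps; algebra)
  also have "\<dots> \<le> p * (1 - p)"
  proof -
    have "u - p = p * (1 - p) * (exp t - 1) / D"
      unfolding u_def using D0 by (simp add: field_simps D_def)
    also have "\<dots> \<ge> 0" using p0 assms(3) et D0 by (intro divide_nonneg_pos mult_nonneg_nonneg) auto
    finally have up: "u \<ge> p" by simp
    have "p * (1 - p) - u * (1 - u) = (u - p) * (u + p - 1)" by (simp add: algebra_simps)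
    also have "\<dots> \<ge> 0" using up assms(2) by (intro mult_nonneg_nonneg) auto
    finally show ?thesis by simp
  qed
  finally have "L'' t \<le> p * (1 - p)" .
  note t(2)
  also have "L'' t * h\<^sup>2 / 2 \<le> (p * (1 - p)) * h\<^sup>2 / 2"
    using \<open>L'' t \<le> p * (1 - p)\<close> by (intro mult_right_mono divide_right_mono) auto
  finally show ?thesis by (simp add: mult_ac)
qed (auto simp: L_def)

definition vq :: "real \<Rightarrow> real" where
  "vq q = (if q \<le> 1/2 then q * (1 - q) else 1/4)"

lemma bern:
  fixes q s :: real
  assumes "0 \<le> q" "q \<le> 1" "0 \<le> s"
  shows "1 - q + q * exp (- s) \<le> exp (- s * q + s\<^sup>2 * vq q / 2)"
proof -
  define p where "p = 1 - q"
  define L where "L = -s * p + ln (1 + p * (exp s - 1))"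
  have pos: "1 + p * (exp s - 1) > 0" unfolding p_def using assms by (intro add_pos_nonneg mult_nonneg_nonneg) auto
  have eq: "1 - q + q * exp (- s) = exp (L - s * q)"
  proof -
    have "exp (L - s * q) = exp (-s) * (1 + p * (exp s - 1))"
      unfolding L_def using pos by (simp add: exp_diff exp_add exp_minus field_simps p_def)
    also have "\<dots> = 1 - q + q * exp (- s)"
      unfolding p_def by (simp add: algebra_simps exp_minus field_simps)
    finally show ?thesis by simp
  qed
  have Lb: "L \<le> s\<^sup>2 * vq q / 2"
  proof (cases "q \<le> 1/2")
    case True
    have "L \<le> s\<^sup>2 * (p * (1 - p)) / 2"
      unfolding L_def by (rule refined_aux) (use assms True in \<open>auto simp: p_def\<close>)
    then show ?thesis using True by (simp add: vq_def p_def mult_ac)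
  next
    case False
    have "L \<le> s\<^sup>2 / 8"
      unfolding L_def by (rule Hoeffdings_lemma_aux) (use assms in \<open>auto simp: p_def\<close>)
    then show ?thesis using False by (simp add: vq_def)
  qed
  show ?thesis unfolding eq using Lb by simp
qed


lemma tail_obs:
  fixes w :: "'a \<Rightarrow> real"
  assumes w0: "\<And>x. 0 \<le> w x" and ws: "w summable_on UNIV" and V0: "V0 > 0"
    and vb: "\<And>x. (w x)\<^sup>2 * vq ((1 - pmf P x)^n) \<le> pmf P x * V0" and e: "\<epsilon> \<ge> 0"
  defines "Wo \<equiv> \<lambda>B. (\<Sum>\<^sub>\<infinity>x. if x \<in> B then 0 else w x)"
  shows "measure_pmf.prob (obs P n) {B. Wo B - measure_pmf.expectation (obs P n) Wo \<le> -\<epsilon>}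
     \<le> exp (-\<epsilon>\<^sup>2/(2*V0))"
proof -
  define Wt where "Wt = infsum w UNIV"
  define E where "E = measure_pmf.expectation (obs P n) Wo"
  define l where "l = \<epsilon> / V0"
  define c where "c = -\<epsilon>\<^sup>2/(2*V0)"
  define Pr where "Pr = measure_pmf.prob (obs P n) {B. Wo B - E \<le> -\<epsilon>}"
  have l0: "0 \<le> l" unfolding l_def using V0 e by simp
  have fs: "(\<lambda>x. if x \<in> B then 0 else w x) summable_on A" for B A
    by (rule summable_on_comparison_test[OF summable_on_subset_banach[OF ws]]) (use w0 in auto)
  have wsA: "w summable_on A" for A by (rule summable_on_subset_banach[OF ws]) auto
  have Wo0: "0 \<le> Wo B" for B unfolding Wo_def by (rule infsum_nonneg) (use w0 in auto)
  have WoT: "Wo B \<le> Wt" for B unfolding Wo_def Wt_def by (rule infsum_mono[OF fs ws]) (use w0 in auto)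
  have Wob: "\<bar>Wo B\<bar> \<le> Wt" for B using Wo0 WoT by simp
  have main: "Pr \<le> exp (l * (Wt - sum w S) + c)" if S: "finite S" for S
  proof -
    define Ws where "Ws B = (\<Sum>x\<in>S. if x \<in> B then 0 else w x)" for B
    have WsWo: "Ws B \<le> Wo B" for B
    proof -
      have "infsum (\<lambda>x. if x \<in> B then 0 else w x) S \<le> Wo B"
        unfolding Wo_def by (rule infsum_mono2[OF fs fs]) (use w0 in auto)
      then show ?thesis using S by (simp add: Ws_def)
    qed
    have WoWs: "Wo B \<le> Ws B + (Wt - sum w S)" for B
    proof -
      have "Wo B = infsum (\<lambda>x. if x \<in> B then 0 else w x) (S \<union> -S)" by (simp add: Wo_def)
      also have "\<dots> = Ws B + infsum (\<lambda>x. if x \<in> B then 0 else w x) (-S)"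
        by (subst infsum_Un_disjoint[OF fs fs]) (use S in \<open>auto simp: Ws_def\<close>)
      finally have 1: "Wo B = Ws B + infsum (\<lambda>x. if x \<in> B then 0 else w x) (-S)" .
      have "Wt = infsum w (S \<union> -S)" by (simp add: Wt_def)
      also have "\<dots> = sum w S + infsum w (-S)"
        by (subst infsum_Un_disjoint[OF wsA wsA]) (use S in auto)
      finally have 2: "Wt = sum w S + infsum w (-S)" .
      have "infsum (\<lambda>x. if x \<in> B then 0 else w x) (-S) \<le> infsum w (-S)"
        by (rule infsum_mono[OF fs wsA]) (use w0 in auto)
      then show ?thesis using 1 2 by simp
    qed
    have Wsb: "\<bar>Ws B\<bar> \<le> sum w S" for B
    proof -
      have "0 \<le> Ws B" unfolding Ws_def by (rule sum_nonneg) (use w0 in auto)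
      moreover have "Ws B \<le> sum w S" unfolding Ws_def by (rule sum_mono) (use w0 in auto)
      ultimately show ?thesis by simp
    qed
    have EWs: "measure_pmf.expectation (obs P n) Ws = (\<Sum>x\<in>S. w x * (1 - pmf P x)^n)"
    proof -
      have "measure_pmf.expectation (obs P n) Ws = (\<Sum>x\<in>S. measure_pmf.expectation (obs P n) (\<lambda>B. if x \<in> B then 0 else w x))"
        unfolding Ws_def[abs_def]
        by (rule Bochner_Integration.integral_sum) (rule intb[where B="w _"], use w0 in auto)
      also have "\<dots> = (\<Sum>x\<in>S. w x * measure_pmf.expectation (obs P n) (\<lambda>B. if x \<in> B then 0 else 1))"
      proof (intro sum.cong refl)
        fix x
        have "(\<lambda>B. if x \<in> B then 0 else w x) = (\<lambda>B. w x * (if x \<in> B then 0 else 1))" by auto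
        then show "measure_pmf.expectation (obs P n) (\<lambda>B. if x \<in> B then 0 else w x) = w x * measure_pmf.expectation (obs P n) (\<lambda>B. if x \<in> B then 0 else 1)"
          by simp
      qed
      also have "\<dots> = (\<Sum>x\<in>S. w x * (1 - pmf P x)^n)" by (simp add: miss_prob)
      finally show ?thesis .
    qed
    have EE: "E \<le> (\<Sum>x\<in>S. w x * (1 - pmf P x)^n) + (Wt - sum w S)"
    proof -
      have "E \<le> measure_pmf.expectation (obs P n) (\<lambda>B. Ws B + (Wt - sum w S))"
        unfolding E_def
      proof (rule integral_mono[OF intb[OF Wob]])
        show "integrable (measure_pmf (obs P n)) (\<lambda>B. Ws B + (Wt - sum w S))"
        proof (rule intb)
          fix B show "\<bar>Ws B + (Wt - sum w S)\<bar> \<le> sum w S + \<bar>Wt - sum w S\<bar>"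
            using Wsb[of B] by linarith
        qed
      qed (use WoWs in auto)
      also have "\<dots> = (\<Sum>x\<in>S. w x * (1 - pmf P x)^n) + (Wt - sum w S)"
        by (subst Bochner_Integration.integral_add) (use Wsb EWs in \<open>auto intro!: intb[where B="sum w S"]\<close>)
      finally show ?thesis .
    qed
    have ind: "indicator {B. Wo B - E \<le> -\<epsilon>} B \<le> exp (l * E - l * \<epsilon>) * exp (- l * Ws B)" for B
    proof (cases "Wo B - E \<le> -\<epsilon>")
      case True
      have "0 \<le> l * (E - \<epsilon> - Wo B)" using True l0 by simp
      also have "\<dots> \<le> l * E - l * \<epsilon> - l * Ws B" using WsWo[of B] l0 by (simp add: algebra_simps mult_left_mono)
      finally have "1 \<le> exp (l * E - l * \<epsilon> - l * Ws B)" by simp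
      then show ?thesis using True by (simp add: exp_add[symmetric] exp_diff)
    qed simp
    have bnd1: "\<bar>exp (l * E - l * \<epsilon>) * exp (- l * Ws B)\<bar> \<le> exp (l * E - l * \<epsilon>)" for B
    proof -
      have "0 \<le> l * Ws B" using l0 Wsb[of B] by (auto intro!: mult_nonneg_nonneg simp: Ws_def w0 sum_nonneg)
      then show ?thesis by simp
    qed
    have "Pr = measure_pmf.expectation (obs P n) (indicator {B. Wo B - E \<le> -\<epsilon>})"
      by (simp add: Pr_def)
    also have "\<dots> \<le> measure_pmf.expectation (obs P n) (\<lambda>B. exp (l * E - l * \<epsilon>) * exp (- l * Ws B))"
      by (rule integral_mono[OF intb[where B=1] intb[OF bnd1] ind]) (auto simp: indicator_def)
    also have "\<dots> = exp (l * E - l * \<epsilon>) * measure_pmf.expectation (obs P n) (\<lambda>B. exp (- l * Ws B))"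
      by simp
    also have "\<dots> \<le> exp (l * E - l * \<epsilon>) * (\<Prod>x\<in>S. 1 - (1 - pmf P x)^n + (1 - pmf P x)^n * exp (- l * w x))"
      unfolding Ws_def by (intro mult_left_mono prod_bound S w0 l0) simp
    also have "\<dots> \<le> exp (l * E - l * \<epsilon>) * (\<Prod>x\<in>S. exp (- (l * w x) * (1 - pmf P x)^n + (l * w x)\<^sup>2 * vq ((1 - pmf P x)^n) / 2))"
    proof (intro mult_left_mono prod_mono conjI)
      fix x assume "x \<in> S"
      have q: "0 \<le> (1 - pmf P x)^n" "(1 - pmf P x)^n \<le> 1" by (auto intro: power_le_one simp: pmf_le_1)
      show "1 - (1 - pmf P x)^n + (1 - pmf P x)^n * exp (- l * w x) \<le> exp (- (l * w x) * (1 - pmf P x)^n + (l * w x)\<^sup>2 * vq ((1 - pmf P x)^n) / 2)"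
        using bern[OF q, of "l * w x"] l0 w0[of x] by (simp add: mult_nonneg_nonneg)
      show "0 \<le> 1 - (1 - pmf P x)^n + (1 - pmf P x)^n * exp (- l * w x)"
        using q by (simp add: add_nonneg_nonneg)
    qed simp
    also have "\<dots> = exp (l * E - l * \<epsilon> + (\<Sum>x\<in>S. - (l * w x) * (1 - pmf P x)^n + (l * w x)\<^sup>2 * vq ((1 - pmf P x)^n) / 2))"
      using S by (simp add: exp_sum exp_add)
    also have "\<dots> \<le> exp (l * (Wt - sum w S) + c)"
    proof -
      have s1: "(\<Sum>x\<in>S. - (l * w x) * (1 - pmf P x)^n + (l * w x)\<^sup>2 * vq ((1 - pmf P x)^n) / 2)
          = - l * (\<Sum>x\<in>S. w x * (1 - pmf P x)^n) + l\<^sup>2 / 2 * (\<Sum>x\<in>S. (w x)\<^sup>2 * vq ((1 - pmf P x)^n))"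
      proof -
        have "- l * (\<Sum>x\<in>S. w x * (1 - pmf P x)^n) + l\<^sup>2 / 2 * (\<Sum>x\<in>S. (w x)\<^sup>2 * vq ((1 - pmf P x)^n))
           = (\<Sum>x\<in>S. - l * (w x * (1 - pmf P x)^n) + l\<^sup>2 / 2 * ((w x)\<^sup>2 * vq ((1 - pmf P x)^n)))"
          by (simp only: sum.distrib sum_distrib_left)
        also have "\<dots> = (\<Sum>x\<in>S. - (l * w x) * (1 - pmf P x)^n + (l * w x)\<^sup>2 * vq ((1 - pmf P x)^n) / 2)"
          by (intro sum.cong refl) (simp add: power_mult_distrib algebra_simps)
        finally show ?thesis by simp
      qed
      have s2: "(\<Sum>x\<in>S. (w x)\<^sup>2 * vq ((1 - pmf P x)^n)) \<le> V0"
      proof -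
        have "(\<Sum>x\<in>S. (w x)\<^sup>2 * vq ((1 - pmf P x)^n)) \<le> (\<Sum>x\<in>S. pmf P x * V0)"
          by (rule sum_mono) (rule vb)
        also have "\<dots> = measure_pmf.prob P S * V0"
          using S by (simp add: sum_distrib_right measure_measure_pmf_finite)
        also have "\<dots> \<le> 1 * V0" using V0 by (intro mult_right_mono) auto
        finally show ?thesis by simp
      qed
      have "l * E \<le> l * ((\<Sum>x\<in>S. w x * (1 - pmf P x)^n) + (Wt - sum w S))"
        using EE l0 by (rule mult_left_mono)
      moreover have "l\<^sup>2 / 2 * (\<Sum>x\<in>S. (w x)\<^sup>2 * vq ((1 - pmf P x)^n)) \<le> l\<^sup>2 / 2 * V0"
        using s2 by (intro mult_left_mono) auto
      moreover have "l\<^sup>2 / 2 * V0 - l * \<epsilon> = c"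
        unfolding l_def c_def using V0 by (simp add: field_simps power2_eq_square)
      ultimately show ?thesis unfolding s1 by (simp add: algebra_simps)
    qed
    finally show ?thesis .
  qed
  have approx: "Pr \<le> exp (l * \<delta> + c)" if dpos: "\<delta> > 0" for \<delta>
  proof -
    obtain S where S: "finite S" "dist (sum w S) (infsum w UNIV) \<le> \<delta>"
      using infsum_finite_approximation[OF ws dpos] by blast
    have "Wt - sum w S \<le> \<delta>" using S(2) by (simp add: Wt_def dist_real_def)
    then have "l * (Wt - sum w S) + c \<le> l * \<delta> + c" using l0 by (simp add: mult_left_mono)
    then show ?thesis using main[OF S(1)] by (meson exp_le_cancel_iff order_trans)
  qed
  have "Pr \<le> exp c"
  proof (rule ccontr)
    assume "\<not> Pr \<le> exp c"
    then have Pc: "exp c < Pr" by simp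
    then have Pp: "0 < Pr" using exp_gt_zero[of c] by linarith
    have lc: "c < ln Pr" using Pc Pp by (metis exp_less_cancel_iff exp_ln)
    define \<delta> where "\<delta> = (ln Pr - c) / (2 * (l + 1))"
    have d0: "\<delta> > 0" unfolding \<delta>_def using lc l0 by simp
    have "l * \<delta> \<le> (ln Pr - c) / 2"
    proof -
      have "l * \<delta> = (ln Pr - c) / 2 * (l / (l + 1))" unfolding \<delta>_def using l0 by (simp add: field_simps)
      also have "\<dots> \<le> (ln Pr - c) / 2 * 1" using lc l0 by (intro mult_left_mono) auto
      finally show ?thesis by simp
    qed
    then have "l * \<delta> + c \<le> (ln Pr - c) / 2 + c" by (rule add_right_mono)
    also have "(ln Pr - c) / 2 + c < ln Pr" using lc by (simp add: field_simps)
    finally have "l * \<delta> + c < ln Pr" .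
    then have "exp (l * \<delta> + c) < Pr" using Pp by (metis exp_less_cancel_iff exp_ln)
    with approx[OF d0] show False by simp
  qed
  then show ?thesis unfolding Pr_def E_def c_def by simp
qed


lemma pmf_summable: "pmf P summable_on UNIV"
proof (rule nonneg_bdd_above_summable_on)
  show "bdd_above (sum (pmf P) ` {F. F \<subseteq> UNIV \<and> finite F})"
  proof (rule bdd_aboveI[where M=1])
    fix y assume "y \<in> sum (pmf P) ` {F. F \<subseteq> UNIV \<and> finite F}"
    then obtain F where "finite F" "y = sum (pmf P) F" by auto
    then have "y = measure_pmf.prob P F" by (simp add: measure_measure_pmf_finite)
    then show "y \<le> 1" by simp
  qed
qed simp

lemma powr_exp_bound:
  fixes a t :: real
  assumes "0 \<le> a" "0 < t"
  shows "t powr a * exp (-t) \<le> exp (a * ln (a + 1))"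
proof -
  have "ln (t / (a + 1)) \<le> t / (a + 1) - 1" using assms by (intro ln_le_minus_one) auto
  then have "ln t \<le> t / (a + 1) - 1 + ln (a + 1)" using assms by (simp add: ln_div)
  then have "a * ln t \<le> a * (t / (a + 1) - 1 + ln (a + 1))" using assms(1) by (rule mult_left_mono)
  also have "\<dots> = a * t / (a + 1) - a + a * ln (a + 1)" by (simp add: algebra_simps)
  also have "a * t / (a + 1) \<le> t" using assms by (simp add: field_simps)
  finally have "a * ln t - t \<le> a * ln (a + 1)" using assms by linarith
  moreover have "t powr a * exp (-t) = exp (a * ln t - t)"
    using assms by (simp add: powr_def exp_diff exp_minus field_simps mult.commute)
  ultimately show ?thesis by simp
qed

lemma gamma_ge:
  fixes \<alpha> t :: real
  assumes "\<alpha> \<ge> 1/2" "t > 0"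
  shows "t powr (2*\<alpha> - 1) * exp (-t) * (1 - exp (-t)) \<le> gamma_alpha \<alpha>"
  unfolding gamma_alpha_def
proof (rule cSUP_upper)
  show "t \<in> {0<..}" using assms by simp
  show "bdd_above ((\<lambda>t. t powr (2*\<alpha> - 1) * exp (-t) * (1 - exp (-t))) ` {0<..})"
  proof (rule bdd_aboveI2[where M="exp ((2*\<alpha> - 1) * ln ((2*\<alpha> - 1) + 1))"])
    fix s :: real assume "s \<in> {0<..}"
    then have s: "s > 0" by simp
    have "s powr (2*\<alpha> - 1) * exp (-s) * (1 - exp (-s)) \<le> s powr (2*\<alpha> - 1) * exp (-s) * 1"
      using s by (intro mult_left_mono) auto
    also have "\<dots> \<le> exp ((2*\<alpha> - 1) * ln ((2*\<alpha> - 1) + 1))"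
      using powr_exp_bound[of "2*\<alpha> - 1" s] s assms by simp
    finally show "s powr (2*\<alpha> - 1) * exp (-s) * (1 - exp (-s)) \<le> exp ((2*\<alpha> - 1) * ln ((2*\<alpha> - 1) + 1))" .
  qed
qed

lemma gamma_ln2:
  fixes \<alpha> :: real
  assumes "\<alpha> \<ge> 1/2"
  shows "ln 2 powr (2*\<alpha> - 1) / 4 \<le> gamma_alpha \<alpha>"
proof -
  have "ln 2 powr (2*\<alpha> - 1) * exp (- ln 2) * (1 - exp (- ln 2)) \<le> gamma_alpha \<alpha>"
    using assms by (intro gamma_ge) auto
  moreover have "exp (- ln 2) = (1/2::real)" by (simp add: exp_minus)
  ultimately show ?thesis by simp
qed

lemma gamma_pos:
  fixes \<alpha> :: real
  assumes "\<alpha> \<ge> 1/2"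
  shows "gamma_alpha \<alpha> > 0"
proof -
  have "ln 2 powr (2*\<alpha> - 1) / 4 > 0" by simp
  then show ?thesis using gamma_ln2[OF assms] by linarith
qed

lemma vq_quarter: "0 \<le> q \<Longrightarrow> q \<le> 1 \<Longrightarrow> 0 \<le> vq q \<and> vq q \<le> 1/4"
  using mult_const_minus_self_real_le[of q 1] by (auto simp: vq_def)

lemma core_var:
  fixes \<alpha> p :: real and n :: nat
  assumes "\<alpha> \<ge> 1" "0 \<le> p" "p \<le> 1"
  shows "(real n * p) powr (2*\<alpha> - 1) * vq ((1 - p)^n) \<le> gamma_alpha \<alpha>"
proof -
  define t where "t = real n * p"
  define q where "q = (1 - p)^n"
  define a where "a = 2*\<alpha> - 1"
  have a0: "a \<ge> 1" unfolding a_def using assms by simp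
  have t0: "t \<ge> 0" unfolding t_def using assms by simp
  have q01: "0 \<le> q" "q \<le> 1" unfolding q_def using assms by (auto intro: power_le_one)
  have qe: "q \<le> exp (-t)"
  proof -
    have "q \<le> exp (-p) ^ n" unfolding q_def using assms
      by (intro power_mono) (auto simp: add.commute[of 1] exp_ge_add_one_self[of "-p", simplified])
    also have "\<dots> = exp (-t)" unfolding t_def by (simp add: exp_of_nat_mult[symmetric])
    finally show ?thesis .
  qed
  show ?thesis
  proof (cases "t < ln 2")
    case True
    have "t powr a * vq q \<le> ln 2 powr a * (1/4)"
      using vq_quarter[OF q01] True t0 a0 by (intro mult_mono powr_mono2) auto
    also have "\<dots> \<le> gamma_alpha \<alpha>" using gamma_ln2[of \<alpha>] assms by (simp add: a_def)
    finally show ?thesis by (simp add: t_def q_def a_def)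
  next
    case False
    then have tpos: "t > 0" using ln_gt_zero[of 2] by linarith
    define e where "e = exp (-t)"
    have e2: "e \<le> 1/2"
    proof -
      have "exp (-t) \<le> exp (- ln 2)" using False by simp
      then show ?thesis by (simp add: e_def exp_minus)
    qed
    have qle: "q \<le> 1/2" using qe e2 by (simp add: e_def)
    have "vq q = q * (1 - q)" using qle by (simp add: vq_def)
    also have "\<dots> \<le> e * (1 - e)"
    proof -
      have "e * (1 - e) - q * (1 - q) = (e - q) * (1 - e - q)" by (simp add: algebra_simps)
      also have "\<dots> \<ge> 0" using qe e2 qle by (intro mult_nonneg_nonneg) (auto simp: e_def)
      finally show ?thesis by simp
    qed
    finally have "t powr a * vq q \<le> t powr a * (e * (1 - e))" by (intro mult_left_mono) auto
    also have "\<dots> \<le> gamma_alpha \<alpha>" using gamma_ge[of \<alpha> t] tpos assms by (simp add: e_def a_def mult_ac)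
    finally show ?thesis by (simp add: t_def q_def a_def)
  qed
qed


lemma occ0: "occ n xs x = 0 \<longleftrightarrow> x \<notin> xs ` {..<n}"
  by (auto simp: occ_def)

lemma transfer:
  fixes w :: "'a \<Rightarrow> real"
  assumes "F = (\<lambda>xs. \<Sum>\<^sub>\<infinity>x. w x * indic_bool (occ n xs x = 0))"
  shows "measure_pmf.prob (sample_pmf P n) {xs. F xs - measure_pmf.expectation (sample_pmf P n) F \<le> -\<epsilon>}
       = measure_pmf.prob (obs P n) {B. (\<Sum>\<^sub>\<infinity>x. if x \<in> B then 0 else w x)
            - measure_pmf.expectation (obs P n) (\<lambda>B. \<Sum>\<^sub>\<infinity>x. if x \<in> B then 0 else w x) \<le> -\<epsilon>}"
proof -
  define Wo where "Wo B = (\<Sum>\<^sub>\<infinity>x. if x \<in> B then 0 else w x)" for B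
  have "F = (\<lambda>xs. Wo (xs ` {..<n}))"
    unfolding assms Wo_def
    by (intro ext infsum_cong) (auto simp: indic_bool_def occ0 simp del: lessThan_iff)
  then show ?thesis
    unfolding obs_def Wo_def[symmetric] by (simp add: vimage_def)
qed

theorem corollary1:
  fixes P :: "'a pmf"
  shows "(\<forall>(\<alpha>::real) (n::nat) (\<epsilon>::real).
            \<alpha> \<ge> 1 \<and> real n \<ge> (2*\<alpha> - 1) * ln 2 / (2*\<alpha> - 1 - ln 2) \<and> \<epsilon> \<ge> 0 \<longrightarrow>
            measure_pmf.prob (sample_pmf P n)
              {xs. M0 P \<alpha> n xs - measure_pmf.expectation (sample_pmf P n) (M0 P \<alpha> n) \<le> - \<epsilon>}
            \<le> exp (- (real n powr (2*\<alpha> - 1) * \<epsilon>\<^sup>2) / (2 * gamma_alpha \<alpha>)))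
       \<and> (\<forall>(k::real) (n::nat) (\<epsilon>::real).
            k > 0 \<and> (\<forall>x\<in>set_pmf P. pmf P x \<ge> 1 / k) \<and> n \<ge> 3 \<and> \<epsilon> \<ge> 0 \<longrightarrow>
            measure_pmf.prob (sample_pmf P n)
              {xs. H0 P n xs - measure_pmf.expectation (sample_pmf P n) (H0 P n) \<le> -\<epsilon>}
            \<le> exp (- (real n * \<epsilon>\<^sup>2) / (2 * gamma_alpha 1 * (log 2 k)\<^sup>2)))"
proof (intro conjI allI impI)
  fix \<alpha> :: real and n :: nat and \<epsilon> :: real
  assume A: "\<alpha> \<ge> 1 \<and> real n \<ge> (2*\<alpha> - 1) * ln 2 / (2*\<alpha> - 1 - ln 2) \<and> \<epsilon> \<ge> 0"
  then have a1: "\<alpha> \<ge> 1" and e0: "\<epsilon> \<ge> 0" by auto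
  have "(2*\<alpha> - 1) * ln 2 / (2*\<alpha> - 1 - ln 2) > 0"
    using a1 ln_2_less_1 by (intro divide_pos_pos mult_pos_pos) auto
  then have npos: "real n > 0" using A by linarith
  define a where "a = 2*\<alpha> - 1"
  define N where "N = real n powr a"
  have Npos: "N > 0" unfolding N_def using npos by simp
  define V0 where "V0 = gamma_alpha \<alpha> / N"
  have gpos: "gamma_alpha \<alpha> > 0" using gamma_pos[of \<alpha>] a1 by simp
  have V0pos: "V0 > 0" unfolding V0_def using gpos Npos by simp
  define w where "w x = pmf P x powr \<alpha>" for x
  have w0: "0 \<le> w x" for x by (simp add: w_def)
  have wle: "w x \<le> pmf P x" for x
  proof (cases "pmf P x = 0")
    case False
    then show ?thesis unfolding w_def using a1 powr_le_one_le[of "pmf P x" \<alpha>] by (simp add: pmf_le_1)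
  qed (simp add: w_def)
  have ws: "w summable_on UNIV"
    by (rule summable_on_comparison_test[OF pmf_summable]) (use wle w0 in auto)
  have vb: "(w x)\<^sup>2 * vq ((1 - pmf P x)^n) \<le> pmf P x * V0" for x
  proof (cases "pmf P x = 0")
    case True then show ?thesis by (simp add: w_def)
  next
    case False
    define p where "p = pmf P x"
    have p0: "p > 0" "p \<le> 1" using False by (auto simp: p_def pmf_le_1 order.not_eq_order_implies_strict)
    have v01: "0 \<le> vq ((1 - p)^n)" using vq_quarter[of "(1-p)^n"] p0 power_le_one[of "1-p" n] by auto
    have w2: "(w x)\<^sup>2 = p * p powr a"
    proof -
      have "(w x)\<^sup>2 = p powr (2 * \<alpha>)" unfolding w_def p_def[symmetric] using p0
        by (simp add: power2_eq_square powr_add[symmetric])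
      also have "\<dots> = p powr (1 + a)" by (simp add: a_def)
      also have "\<dots> = p * p powr a" using p0 by (simp add: powr_add)
      finally show ?thesis .
    qed
    have cv: "(real n * p) powr a * vq ((1 - p)^n) \<le> gamma_alpha \<alpha>"
      unfolding a_def by (rule core_var) (use a1 p0 in auto)
    then have "N * (p powr a * vq ((1 - p)^n)) \<le> gamma_alpha \<alpha>"
      using npos p0 by (simp add: N_def powr_mult mult_ac)
    then have "p powr a * vq ((1 - p)^n) \<le> V0"
      unfolding V0_def using Npos by (simp add: field_simps mult_ac)
    then have "p * (p powr a * vq ((1 - p)^n)) \<le> p * V0" using p0 by (intro mult_left_mono) auto
    then show ?thesis using w2 by (simp add: p_def mult_ac)
  qed
  have M0eq: "M0 P \<alpha> n = (\<lambda>xs. \<Sum>\<^sub>\<infinity>x. w x * indic_bool (occ n xs x = 0))"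
    by (rule ext) (simp add: M0_def w_def)
  have "measure_pmf.prob (sample_pmf P n)
              {xs. M0 P \<alpha> n xs - measure_pmf.expectation (sample_pmf P n) (M0 P \<alpha> n) \<le> - \<epsilon>}
        \<le> exp (-\<epsilon>\<^sup>2/(2*V0))"
    unfolding transfer[OF M0eq] by (rule tail_obs[OF w0 ws V0pos vb e0])
  also have "-\<epsilon>\<^sup>2/(2*V0) = - (real n powr (2*\<alpha> - 1) * \<epsilon>\<^sup>2) / (2 * gamma_alpha \<alpha>)"
    unfolding V0_def N_def a_def using gpos npos by (simp add: field_simps)
  finally show "measure_pmf.prob (sample_pmf P n)
              {xs. M0 P \<alpha> n xs - measure_pmf.expectation (sample_pmf P n) (M0 P \<alpha> n) \<le> - \<epsilon>}
            \<le> exp (- (real n powr (2*\<alpha> - 1) * \<epsilon>\<^sup>2) / (2 * gamma_alpha \<alpha>))" .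
next
  fix k :: real and n :: nat and \<epsilon> :: real
  assume A: "k > 0 \<and> (\<forall>x\<in>set_pmf P. pmf P x \<ge> 1 / k) \<and> n \<ge> 3 \<and> \<epsilon> \<ge> 0"
  then have k0: "k > 0" and kp: "\<And>x. x \<in> set_pmf P \<Longrightarrow> pmf P x \<ge> 1 / k" and n3: "n \<ge> 3" and e0: "\<epsilon> \<ge> 0"
    by auto
  obtain x0 where "x0 \<in> set_pmf P" using set_pmf_not_empty[of P] by blast
  then have "1 / k \<le> 1" using kp[of x0] pmf_le_1[of P x0] by linarith
  then have k1: "k \<ge> 1" using k0 by (simp add: field_simps)
  let ?G = "measure_pmf.prob (sample_pmf P n)
              {xs. H0 P n xs - measure_pmf.expectation (sample_pmf P n) (H0 P n) \<le> -\<epsilon>}"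
  show "?G \<le> exp (- (real n * \<epsilon>\<^sup>2) / (2 * gamma_alpha 1 * (log 2 k)\<^sup>2))"
  proof (cases "k = 1")
    case True
    then show ?thesis by simp
  next
    case False
    define L where "L = log 2 k"
    have Lpos: "L > 0" unfolding L_def using k1 False by simp
    have npos: "real n > 0" using n3 by simp
    have gpos: "gamma_alpha 1 > 0" using gamma_pos[of 1] by simp
    define V0 where "V0 = gamma_alpha 1 * L\<^sup>2 / real n"
    have V0pos: "V0 > 0" unfolding V0_def using gpos Lpos npos by simp
    define w where "w x = pmf P x * log 2 (1 / pmf P x)" for x
    have wb: "0 \<le> w x \<and> w x \<le> pmf P x * L" for x
    proof (cases "pmf P x = 0")
      case True then show ?thesis by (simp add: w_def)
    next
      case False
      then have xs: "x \<in> set_pmf P" by (simp add: set_pmf_eq)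
      have p0: "pmf P x > 0" "pmf P x \<le> 1" using False by (auto simp: pmf_le_1 order.not_eq_order_implies_strict)
      have "1 / pmf P x \<le> k" using kp[OF xs] p0 k0 by (simp add: field_simps)
      moreover have "1 \<le> 1 / pmf P x" using p0 by simp
      ultimately have "0 \<le> log 2 (1 / pmf P x)" "log 2 (1 / pmf P x) \<le> L"
        unfolding L_def using p0 k0 by (auto simp: log_le_cancel_iff)
      then show ?thesis unfolding w_def using p0 by (auto intro: mult_left_mono)
    qed
    have w0: "0 \<le> w x" for x using wb by simp
    have ws: "w summable_on UNIV"
      by (rule summable_on_comparison_test[OF summable_on_cmult_left[OF pmf_summable]]) (use wb in auto)
    have vb: "(w x)\<^sup>2 * vq ((1 - pmf P x)^n) \<le> pmf P x * V0" for x
    proof -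
      define p where "p = pmf P x"
      have p0: "p \<ge> 0" "p \<le> 1" by (auto simp: p_def pmf_le_1)
      have v01: "0 \<le> vq ((1 - p)^n)" using vq_quarter[of "(1-p)^n"] p0 power_le_one[of "1-p" n] by auto
      have cv: "(real n * p) powr (2*1 - 1) * vq ((1 - p)^n) \<le> gamma_alpha 1"
        by (rule core_var) (use p0 in auto)
      then have "real n * (p * vq ((1 - p)^n)) \<le> gamma_alpha 1" using p0 by (simp add: mult_ac)
      then have pv: "p * vq ((1 - p)^n) \<le> gamma_alpha 1 / real n" using npos by (simp add: field_simps)
      have "(w x)\<^sup>2 \<le> (p * L)\<^sup>2" using wb[of x] by (intro power_mono) (auto simp: p_def)
      then have "(w x)\<^sup>2 * vq ((1 - p)^n) \<le> (p * L)\<^sup>2 * vq ((1 - p)^n)" using v01 by (rule mult_right_mono)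
      also have "\<dots> = p * L\<^sup>2 * (p * vq ((1 - p)^n))" by (simp add: power2_eq_square mult_ac)
      also have "\<dots> \<le> p * L\<^sup>2 * (gamma_alpha 1 / real n)" using pv p0 by (intro mult_left_mono) auto
      also have "\<dots> = p * V0" by (simp add: V0_def)
      finally show ?thesis by (simp add: p_def)
    qed
    have H0eq: "H0 P n = (\<lambda>xs. \<Sum>\<^sub>\<infinity>x. w x * indic_bool (occ n xs x = 0))"
      by (rule ext) (simp add: H0_def w_def)
    have "?G \<le> exp (-\<epsilon>\<^sup>2/(2*V0))"
      unfolding transfer[OF H0eq] by (rule tail_obs[OF w0 ws V0pos vb e0])
    also have "-\<epsilon>\<^sup>2/(2*V0) = - (real n * \<epsilon>\<^sup>2) / (2 * gamma_alpha 1 * (log 2 k)\<^sup>2)"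
      unfolding V0_def L_def[symmetric] using gpos npos Lpos by (simp add: field_simps)
    finally show ?thesis .
  qed
qed

end
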